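(* Let $F$ be a distribution function on $(0,1)$ with density $1+f$, where $f$ is 1-periodic, $f\in\mathbb{L}_2(0,1)$, $f(x)=\sum_{j=-\infty}^{\infty}\theta_j e^{2\pi ijx}$ with $\theta_0=0$. For an integer $m_n\ge1$ let $p_l=F(l/m_n)-F((l-1)/m_n)$, $1\le l\le m_n$, and $T_n(F)=nm_n\sum_{l=1}^{m_n}(p_l-1/m_n)^2$. Then $$n^{-1}m_n^{-1}T_n(F)=m_n\sum_{k=-\infty}^{\infty}\ \sum_{j\ne km_n}\frac{\theta_j\bar\theta_{j-km_n}}{4\pi^2j(j-km_n)}\big(2-2\cos(2\pi j/m_n)\big),$$ with the convention $0/0=0$.
   Context: $\bar z$ denotes the complex conjugate of $z$; the Fourier coefficients satisfy $\theta_{-j}=\bar\theta_j$. *)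

theory Defs
  imports "HOL-Analysis.Analysis"
begin

definition fourier_coeff :: "(real \<Rightarrow> real) \<Rightarrow> int \<Rightarrow> complex" where
  "fourier_coeff f j =
     (LINT x:{0..1}|lborel. complex_of_real (f x) * exp (- (2 * pi * of_int j * x) * \<i>))"

definition cell_prob :: "(real \<Rightarrow> real) \<Rightarrow> nat \<Rightarrow> nat \<Rightarrow> real" where
  "cell_prob F m l = F (real l / real m) - F ((real l - 1) / real m)"

definition T_stat :: "nat \<Rightarrow> nat \<Rightarrow> (real \<Rightarrow> real) \<Rightarrow> real" where
  "T_stat n m F = real n * real m * (\<Sum>l=1..m. (cell_prob F m l - 1 / real m)\<^sup>2)"

end

theory Submission
  imports Defs
begin
definition ee :: "int \<Rightarrow> real \<Rightarrow> complex" where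
  "ee j x = exp (complex_of_real (2 * pi * real_of_int j * x) * \<i>)"

lemma ee_mult: "ee j x * ee k x = ee (j + k) x"
  unfolding ee_def by (simp add: exp_add[symmetric] algebra_simps)

lemma norm_ee [simp]: "norm (ee j x) = 1"
  unfolding ee_def by (metis mult.commute norm_exp_i_times)

lemma cnj_ee: "cnj (ee j x) = ee (- j) x"
  unfolding ee_def by (simp add: exp_cnj)

lemma ee_0 [simp]: "ee 0 x = 1"
  unfolding ee_def by simp

lemma ee_at_0 [simp]: "ee j 0 = 1"
  unfolding ee_def by simp

lemma ee_at_1 [simp]: "ee j 1 = 1"
proof -
  have "exp (complex_of_real (2 * real_of_int j * pi) * \<i>) = 1"
    by (rule exp_integer_2pi) simp
  then show ?thesis unfolding ee_def by (simp add: mult_ac)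
qed

lemma ee_add: "ee j (x + y) = ee j x * ee j y"
  unfolding ee_def by (simp add: exp_add[symmetric] algebra_simps)

lemma continuous_on_ee [continuous_intros]: "continuous_on S (ee j)"
  unfolding ee_def by (intro continuous_intros)

lemma ee_scaleR: "ee j x = exp (x *\<^sub>R (complex_of_real (2 * pi * real_of_int j) * \<i>))"
  unfolding ee_def by (simp add: scaleR_conv_of_real algebra_simps)

lemma ee_deriv:
  "(ee j has_vector_derivative (complex_of_real (2 * pi * real_of_int j) * \<i> * ee j x)) (at x within S)"
  unfolding ee_scaleR[abs_def]
  using exp_scaleR_has_vector_derivative_right[of "complex_of_real (2 * pi * real_of_int j) * \<i>" x S]
  by (simp add: ee_scaleR mult.commute)

lemma has_integral_ee:
  assumes "a \<le> b" "j \<noteq> 0"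
  shows "(ee j has_integral (ee j b - ee j a) / (complex_of_real (2 * pi * real_of_int j) * \<i>)) {a..b}"
proof -
  define c where "c = complex_of_real (2 * pi * real_of_int j) * \<i>"
  have c: "c \<noteq> 0" using assms(2) by (simp add: c_def)
  have "((\<lambda>x. ee j x / c) has_vector_derivative ee j x) (at x within {a..b})" for x
    using has_vector_derivative_divide[OF ee_deriv[of j x "{a..b}"], of c] c
    by (simp add: c_def)
  from fundamental_theorem_of_calculus[OF assms(1) this]
  show ?thesis by (simp add: c_def diff_divide_distrib)
qed

lemma has_integral_ee01: "(ee j has_integral (if j = 0 then 1 else 0)) {0..1}"
proof (cases "j = 0")
  case True
  have "ee 0 = (\<lambda>x. 1)" by (rule ext) simp
  then show ?thesis using True has_integral_const_real[of "1::complex" 0 1] by simp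
next
  case False
  then show ?thesis using has_integral_ee[of 0 1 j] by simp
qed

definition TP :: "(real \<Rightarrow> complex) \<Rightarrow> bool" where
  "TP t \<longleftrightarrow> (\<exists>J c. finite J \<and> (\<forall>x. t x = (\<Sum>j\<in>J. c j * ee j x)))"

lemma TP_ee: "TP (\<lambda>x. a * ee k x)"
  unfolding TP_def by (rule exI[of _ "{k}"], rule exI[of _ "\<lambda>_. a"]) simp

lemma TP_const: "TP (\<lambda>x. a)"
  using TP_ee[of a 0] by simp

lemma TP_add:
  assumes "TP t" "TP s" shows "TP (\<lambda>x. t x + s x)"
proof -
  obtain J c where J: "finite J" "\<forall>x. t x = (\<Sum>j\<in>J. c j * ee j x)" using assms(1) unfolding TP_def by blast
  obtain K d where K: "finite K" "\<forall>x. s x = (\<Sum>j\<in>K. d j * ee j x)" using assms(2) unfolding TP_def by blast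
  define e where "e j = (if j \<in> J then c j else 0) + (if j \<in> K then d j else 0)" for j
  have "t x + s x = (\<Sum>j\<in>J \<union> K. e j * ee j x)" for x
  proof -
    have "(\<Sum>j\<in>J \<union> K. e j * ee j x) =
      (\<Sum>j\<in>J \<union> K. if j \<in> J then c j * ee j x else 0) + (\<Sum>j\<in>J \<union> K. if j \<in> K then d j * ee j x else 0)"
      unfolding e_def distrib_right sum.distrib[symmetric] by (intro sum.cong) auto
    also have "\<dots> = (\<Sum>j\<in>J. c j * ee j x) + (\<Sum>j\<in>K. d j * ee j x)"
    proof -
      have "(\<Sum>j\<in>J \<union> K. if j \<in> J then c j * ee j x else 0) = (\<Sum>j\<in>(J \<union> K) \<inter> J. c j * ee j x)"
        using J(1) K(1) by (rule sum.inter_restrict[symmetric, OF finite_UnI])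
      moreover have "(\<Sum>j\<in>J \<union> K. if j \<in> K then d j * ee j x else 0) = (\<Sum>j\<in>(J \<union> K) \<inter> K. d j * ee j x)"
        using J(1) K(1) by (rule sum.inter_restrict[symmetric, OF finite_UnI])
      moreover have "(J \<union> K) \<inter> J = J" "(J \<union> K) \<inter> K = K" by auto
      ultimately show ?thesis by simp
    qed
    finally show ?thesis using J K by simp
  qed
  then show ?thesis unfolding TP_def using J(1) K(1) by blast
qed

lemma TP_sum:
  assumes "finite I" "\<And>i. i \<in> I \<Longrightarrow> TP (t i)" shows "TP (\<lambda>x. \<Sum>i\<in>I. t i x)"
  using assms
proof (induction I rule: finite_induct)
  case empty
  then show ?case using TP_const[of 0] by simp
next
  case (insert i I)
  then show ?case using TP_add[of "t i" "\<lambda>x. \<Sum>i\<in>I. t i x"] by simp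
qed

lemma TP_mult:
  assumes "TP t" "TP s" shows "TP (\<lambda>x. t x * s x)"
proof -
  obtain J c where J: "finite J" "\<forall>x. t x = (\<Sum>j\<in>J. c j * ee j x)" using assms(1) unfolding TP_def by blast
  obtain K d where K: "finite K" "\<forall>x. s x = (\<Sum>j\<in>K. d j * ee j x)" using assms(2) unfolding TP_def by blast
  have eq: "(\<lambda>x. t x * s x) = (\<lambda>x. \<Sum>j\<in>J. \<Sum>k\<in>K. (c j * d k) * ee (j + k) x)"
  proof
    fix x
    show "t x * s x = (\<Sum>j\<in>J. \<Sum>k\<in>K. (c j * d k) * ee (j + k) x)"
      using J K by (simp add: sum_product ee_mult[symmetric] mult_ac)
  qed
  show ?thesis unfolding eq
    using J(1) K(1) by (intro TP_sum TP_ee) auto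
qed

lemma TP_integral:
  assumes h: "\<And>k. ((\<lambda>x. complex_of_real (h x) * ee k x) has_integral 0) {0..1}" and "TP t"
  shows "((\<lambda>x. complex_of_real (h x) * t x) has_integral 0) {0..1}"
proof -
  obtain J c where J: "finite J" "\<forall>x. t x = (\<Sum>j\<in>J. c j * ee j x)" using assms(2) unfolding TP_def by blast
  have "((\<lambda>x. \<Sum>j\<in>J. c j * (complex_of_real (h x) * ee j x)) has_integral (\<Sum>j\<in>J. c j * 0)) {0..1}"
    using J(1) by (intro has_integral_sum has_integral_mult_right h)
  moreover have "(\<lambda>x. \<Sum>j\<in>J. c j * (complex_of_real (h x) * ee j x)) = (\<lambda>x. complex_of_real (h x) * t x)"
    using J(2) by (auto simp: sum_distrib_left mult_ac)
  ultimately show ?thesis by simp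
qed

lemma linear_complex_decomp:
  assumes "bounded_linear (p :: complex \<Rightarrow> real)"
  shows "p z = Re z * p 1 + Im z * p \<i>"
proof -
  interpret bounded_linear p by fact
  have "z = Re z *\<^sub>R 1 + Im z *\<^sub>R \<i>" by (simp add: complex_eq_iff)
  then have "p z = p (Re z *\<^sub>R 1 + Im z *\<^sub>R \<i>)" by simp
  also have "\<dots> = Re z * p 1 + Im z * p \<i>" by (simp add: add scale)
  finally show ?thesis .
qed

lemma poly_TP:
  assumes "real_polynomial_function p"
  shows "TP (\<lambda>x. complex_of_real (p (ee 1 x)))"
  using assms
proof (induction p rule: real_polynomial_function.induct)
  case (linear p)
  define h :: complex where "h = 1/2"
  define d :: complex where "d = inverse (2 * \<i>)"
  have re: "complex_of_real (Re (ee 1 x)) = (ee 1 x + ee (-1) x) * h" for x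
    using complex_add_cnj[of "ee 1 x"] by (simp add: cnj_ee h_def)
  have im: "complex_of_real (Im (ee 1 x)) = (ee 1 x - ee (-1) x) * d" for x
  proof -
    have "ee 1 x - ee (-1) x = complex_of_real (2 * Im (ee 1 x)) * \<i>"
      using complex_diff_cnj[of "ee 1 x"] by (simp add: cnj_ee)
    then show ?thesis by (simp add: d_def)
  qed
  have aux: "(z+w)*h*A + (z-w)*d*B = (A*h + B*d)*z + (A*h - B*d)*w" for z w A B :: complex
    by (simp add: algebra_simps)
  have "(\<lambda>x. complex_of_real (p (ee 1 x))) =
     (\<lambda>x. (complex_of_real (p 1) * h + complex_of_real (p \<i>) * d) * ee 1 x +
          (complex_of_real (p 1) * h - complex_of_real (p \<i>) * d) * ee (-1) x)"
  proof
    fix x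
    have "complex_of_real (p (ee 1 x)) = complex_of_real (Re (ee 1 x)) * complex_of_real (p 1) +
        complex_of_real (Im (ee 1 x)) * complex_of_real (p \<i>)"
    proof -
      have eq: "p (ee 1 x) = Re (ee 1 x) * p 1 + Im (ee 1 x) * p \<i>"
        by (rule linear_complex_decomp[OF linear])
      show ?thesis by (subst eq) (simp only: of_real_add of_real_mult)
    qed
    then show "complex_of_real (p (ee 1 x)) =
     (complex_of_real (p 1) * h + complex_of_real (p \<i>) * d) * ee 1 x +
          (complex_of_real (p 1) * h - complex_of_real (p \<i>) * d) * ee (-1) x"
      unfolding re im aux by simp
  qed
  then show ?case by (simp add: TP_add TP_ee)
next
  case (const c)
  then show ?case by (rule TP_const)
next
  case (add f g)
  then show ?case using TP_add by simp
next
  case (mult f g)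
  then show ?case using TP_mult by simp
qed

lemma ee1_eq:
  assumes "x \<in> {0..1}" "y \<in> {0..1}" "ee 1 x = ee 1 y"
  shows "x = y \<or> (x = 0 \<and> y = 1) \<or> (x = 1 \<and> y = 0)"
proof -
  have "ee 1 x = ee 1 (x - y) * ee 1 y" using ee_add[of 1 "x - y" y] by simp
  then have "ee 1 (x - y) = 1"
    using assms(3) norm_ee[of 1 y] by (metis mult_cancel_right1 norm_zero zero_neq_one)
  then obtain n :: int where "2 * pi * (x - y) = real_of_int (2 * n) * pi"
    unfolding ee_def exp_eq_1 by auto
  then have "(2 * pi) * (x - y) = (2 * pi) * real_of_int n" by (simp add: algebra_simps)
  then have n: "x - y = real_of_int n" using pi_gt_zero by (metis mult_cancel_left pi_neq_zero zero_neq_numeral mult_eq_0_iff)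
  have "n = 0 \<or> n = 1 \<or> n = -1"
  proof -
    have "\<bar>real_of_int n\<bar> \<le> 1" using n assms(1,2) by auto
    then have "\<bar>n\<bar> \<le> 1" by linarith
    then show ?thesis by auto
  qed
  then show ?thesis using n assms(1,2) by auto
qed

lemma trig_unique:
  fixes h :: "real \<Rightarrow> real"
  assumes cont: "continuous_on {0..1} h" and per: "h 0 = h 1"
    and coef: "\<And>k. ((\<lambda>x. complex_of_real (h x) * ee k x) has_integral 0) {0..1}"
    and x: "x \<in> {0..1}"
  shows "h x = 0"
proof -
  define S where "S = ee 1 ` {0..1}"
  have cS: "compact S" unfolding S_def
    by (intro compact_continuous_image continuous_on_ee) auto
  define g where "g z = h (SOME x. x \<in> {0..1} \<and> ee 1 x = z)" for z
  have gee: "g (ee 1 x) = h x" if "x \<in> {0..1}" for x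
  proof -
    have ex: "\<exists>y. y \<in> {0..1} \<and> ee 1 y = ee 1 x" using that by blast
    define y where "y = (SOME y. y \<in> {0..1} \<and> ee 1 y = ee 1 x)"
    have y: "y \<in> {0..1}" "ee 1 y = ee 1 x" using someI_ex[OF ex] unfolding y_def by auto
    have "h y = h x" using ee1_eq[OF y(1) that y(2)] per by auto
    then show ?thesis unfolding g_def y_def[symmetric] .
  qed
  have qm: "quotient_map (top_of_set {0..1}) (top_of_set S) (ee 1)"
  proof (rule continuous_imp_quotient_map)
    show "continuous_map (top_of_set {0..1}) (top_of_set S) (ee 1)"
      unfolding continuous_map_subtopology_eu S_def by (auto intro: continuous_on_ee)
    show "compact_space (top_of_set {0..1::real})"
      by (simp add: compact_space_subtopology)
    show "Hausdorff_space (top_of_set S)"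
      by (simp add: Hausdorff_space_subtopology)
    show "ee 1 ` topspace (top_of_set {0..1}) = topspace (top_of_set S)"
      by (simp add: S_def)
  qed
  have cm: "continuous_map (top_of_set {0..1}) euclideanreal (g \<circ> ee 1)"
  proof (rule continuous_map_eq)
    show "continuous_map (top_of_set {0..1}) euclideanreal h"
      using cont by simp
    show "h x = (g \<circ> ee 1) x" if "x \<in> topspace (top_of_set {0..1})" for x
      using that gee by simp
  qed
  have gcont: "continuous_on S g"
    using continuous_compose_quotient_map[OF qm cm] by (simp add: continuous_map_iff_continuous)
  have hint: "(\<lambda>x. f x) integrable_on {0..1}" if "continuous_on {0..1} f" for f :: "real \<Rightarrow> real"
    using that by (rule integrable_continuous_real)
  define I2 where "I2 = integral {0..1} (\<lambda>x. h x * h x)"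
  define M where "M = integral {0..1} (\<lambda>x. \<bar>h x\<bar>)"
  have M0: "M \<ge> 0" unfolding M_def
    by (rule integral_nonneg) (auto intro: hint continuous_intros cont)
  have I20: "I2 \<ge> 0" unfolding I2_def
    by (rule integral_nonneg) (auto intro: hint continuous_intros cont)
  have bound: "I2 \<le> M * e" if e: "e > 0" for e
  proof -
    obtain p where p: "real_polynomial_function p" "\<And>z. z \<in> S \<Longrightarrow> \<bar>g z - p z\<bar> < e"
      using Stone_Weierstrass_real_polynomial_function[OF cS gcont e] by blast
    have pc: "continuous_on {0..1} (\<lambda>x. p (ee 1 x))"
      by (rule continuous_on_compose2[of UNIV p]) (auto intro: continuous_on_ee continuous_at_imp_continuous_on continuous_real_polymonial_function p(1))
    have close: "\<bar>h x - p (ee 1 x)\<bar> < e" if "x \<in> {0..1}" for x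
      using p(2)[of "ee 1 x"] gee[OF that] that by (auto simp: S_def)
    have "((\<lambda>x. complex_of_real (h x) * complex_of_real (p (ee 1 x))) has_integral 0) {0..1}"
      by (rule TP_integral[OF coef poly_TP[OF p(1)]])
    from has_integral_linear[OF this bounded_linear_Re]
    have hp: "((\<lambda>x. h x * p (ee 1 x)) has_integral 0) {0..1}" by (simp add: o_def)
    have "I2 = integral {0..1} (\<lambda>x. h x * (h x - p (ee 1 x)) + h x * p (ee 1 x))"
      unfolding I2_def by (simp add: algebra_simps)
    also have "\<dots> = integral {0..1} (\<lambda>x. h x * (h x - p (ee 1 x))) + integral {0..1} (\<lambda>x. h x * p (ee 1 x))"
      by (rule integral_add) (auto intro!: hint continuous_intros cont pc)
    also have "integral {0..1} (\<lambda>x. h x * p (ee 1 x)) = 0"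
      using hp by (rule integral_unique)
    also have "integral {0..1} (\<lambda>x. h x * (h x - p (ee 1 x))) \<le> integral {0..1} (\<lambda>x. \<bar>h x\<bar> * e)"
    proof (rule integral_le)
      show "(\<lambda>x. h x * (h x - p (ee 1 x))) integrable_on {0..1}"
        by (auto intro!: hint continuous_intros cont pc)
      show "(\<lambda>x. \<bar>h x\<bar> * e) integrable_on {0..1}"
        by (auto intro!: hint continuous_intros cont pc)
      fix x :: real assume "x \<in> {0..1}"
      then have "\<bar>h x - p (ee 1 x)\<bar> \<le> e" using close by (simp add: less_imp_le)
      then have "\<bar>h x * (h x - p (ee 1 x))\<bar> \<le> \<bar>h x\<bar> * e"
        by (simp add: abs_mult mult_left_mono)
      then show "h x * (h x - p (ee 1 x)) \<le> \<bar>h x\<bar> * e" by linarith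
    qed
    also have "integral {0..1} (\<lambda>x. \<bar>h x\<bar> * e) = M * e"
      unfolding M_def by simp
    finally show ?thesis by simp
  qed
  have "I2 = 0"
  proof (rule ccontr)
    assume "I2 \<noteq> 0"
    then have pos: "I2 > 0" using I20 by simp
    have "I2 \<le> M * (I2 / (M + 1))" using bound[of "I2 / (M + 1)"] pos M0 by simp
    also have "\<dots> < I2" using pos M0 by (simp add: field_simps)
    finally show False by simp
  qed
  then have "((\<lambda>x. h x * h x) has_integral 0) {0..1}"
    unfolding I2_def using hint[of "\<lambda>x. h x * h x"] cont
    by (metis continuous_on_mult has_integral_integral)
  then have "h x * h x = 0"
    using has_integral_0_cbox_imp_0[of 0 1 "\<lambda>x. h x * h x" x] x cont
    by (auto intro: continuous_on_mult)
  then show ?thesis by simp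
qed

lemma set_integrable_cont01:
  fixes c :: "real \<Rightarrow> 'b::{banach, second_countable_topology}"
  assumes "continuous_on {0..1} c"
  shows "set_integrable lborel {0..1} c"
  unfolding set_integrable_def using borel_integrable_compact[OF compact_Icc assms] .

lemma cont_bounded01:
  fixes c :: "real \<Rightarrow> 'b::real_normed_vector"
  assumes "continuous_on {0..1} c"
  obtains C where "C \<ge> 0" "\<And>x. x \<in> {0..1} \<Longrightarrow> norm (c x) \<le> C"
proof -
  have "bounded (c ` {0..1})" by (rule compact_imp_bounded[OF compact_continuous_image[OF assms compact_Icc]])
  then obtain C where "C > 0" "\<And>y. y \<in> c ` {0..1} \<Longrightarrow> norm y \<le> C" by (auto simp: bounded_pos)
  then show ?thesis using that[of C] by auto
qed

context
  fixes f :: "real \<Rightarrow> real"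
  assumes meas [measurable]: "f \<in> borel_measurable lborel"
    and L2: "set_integrable lborel {0..1} (\<lambda>x. (f x)\<^sup>2)"
begin

lemma f_int: "set_integrable lborel {0..1} f"
proof (rule set_integrable_bound[of _ _ "\<lambda>x. 1 + (f x)\<^sup>2"])
  show "set_integrable lborel {0..1} (\<lambda>x. 1 + (f x)\<^sup>2)"
    using set_integral_add(1)[OF set_integrable_cont01[of "\<lambda>_. 1::real"] L2] by simp
  show "set_borel_measurable lborel {0..1} f"
    unfolding set_borel_measurable_def by measurable
  show "AE x in lborel. x \<in> {0..1} \<longrightarrow> norm (f x) \<le> norm (1 + (f x)\<^sup>2)"
  proof (rule AE_I2, intro impI)
    fix x
    have "\<bar>f x\<bar> \<le> 1 + (f x)\<^sup>2"
    proof (cases "\<bar>f x\<bar> \<le> 1")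
      case True then show ?thesis by (simp add: add_increasing2)
    next
      case False
      then have "\<bar>f x\<bar> * 1 \<le> \<bar>f x\<bar> * \<bar>f x\<bar>" by (intro mult_left_mono) auto
      then show ?thesis by (simp add: power2_eq_square)
    qed
    then show "norm (f x) \<le> norm (1 + (f x)\<^sup>2)" by simp
  qed
qed

lemma f_cont_int:
  fixes c :: "real \<Rightarrow> 'b::{real_normed_algebra_1, banach, second_countable_topology}"
  assumes "continuous_on UNIV c"
  shows "set_integrable lborel {0..1} (\<lambda>x. of_real (f x) * c x)"
proof -
  obtain C where C: "C \<ge> 0" "\<And>x. x \<in> {0..1} \<Longrightarrow> norm (c x) \<le> C"
    using cont_bounded01[OF continuous_on_subset[OF assms]] by blast
  have cm: "c \<in> borel_measurable lborel"
    using borel_measurable_continuous_onI[OF assms] by simp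
  show ?thesis
  proof (rule set_integrable_bound[of _ _ "\<lambda>x. C * f x"])
    show "set_integrable lborel {0..1} (\<lambda>x. C * f x)"
      using f_int by simp
    show "set_borel_measurable lborel {0..1} (\<lambda>x. of_real (f x) * c x)"
      unfolding set_borel_measurable_def using cm by measurable
    show "AE x in lborel. x \<in> {0..1} \<longrightarrow> norm (of_real (f x) * c x) \<le> norm (C * f x)"
    proof (rule AE_I2, intro impI)
      fix x :: real assume x: "x \<in> {0..1}"
      have "norm (of_real (f x) * c x) \<le> \<bar>f x\<bar> * norm (c x)"
        by (simp add: scaleR_conv_of_real[symmetric])
      also have "\<dots> \<le> \<bar>f x\<bar> * C" using C(2)[OF x] by (simp add: mult_left_mono)
      finally show "norm (of_real (f x) * c x) \<le> norm (C * f x)" using C(1) by (simp add: abs_mult mult.commute)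
    qed
  qed
qed

lemma f_cont_HK:
  fixes c :: "real \<Rightarrow> 'b::{real_normed_algebra_1, euclidean_space}"
  assumes "continuous_on UNIV c"
  shows "(\<lambda>x. of_real (f x) * c x) integrable_on {0..1}"
    and "(LINT x:{0..1}|lborel. of_real (f x) * c x) = integral {0..1} (\<lambda>x. of_real (f x) * c x)"
  using f_cont_int[OF assms] set_borel_integral_eq_integral by blast+

lemma theta_HK: "fourier_coeff f j = integral {0..1} (\<lambda>x. complex_of_real (f x) * ee (- j) x)"
  unfolding fourier_coeff_def ee_def
  using f_cont_HK(2)[of "ee (-j)"] continuous_on_ee[of UNIV "-j"] unfolding ee_def by simp

lemma theta_int: "(\<lambda>x. complex_of_real (f x) * ee j x) integrable_on {0..1}"
  using f_cont_HK(1)[of "ee j"] continuous_on_ee[of UNIV j] by simp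

lemma cnj_theta: "cnj (fourier_coeff f j) = integral {0..1} (\<lambda>x. complex_of_real (f x) * ee j x)"
  unfolding theta_HK integral_cnj by (simp add: cnj_ee)

end

context
  fixes f :: "real \<Rightarrow> real"
  assumes meas [measurable]: "f \<in> borel_measurable lborel"
    and L2: "set_integrable lborel {0..1} (\<lambda>x. (f x)\<^sup>2)"
begin

lemma f2_HK: "(\<lambda>x. (f x)\<^sup>2) integrable_on {0..1}"
  using L2 set_borel_integral_eq_integral by blast

lemma bessel_finite:
  assumes J: "finite J"
  shows "(\<Sum>j\<in>J. (cmod (fourier_coeff f j))\<^sup>2) \<le> integral {0..1} (\<lambda>x. (f x)\<^sup>2)"
proof -
  define th where "th = fourier_coeff f"
  define P where "P x = (\<Sum>j\<in>J. th j * ee j x)" for x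
  define s where "s = (\<Sum>j\<in>J. (cmod (th j))\<^sup>2)"
  define A where "A = integral {0..1} (\<lambda>x. (f x)\<^sup>2)"
  have Pc: "continuous_on UNIV P" unfolding P_def by (intro continuous_intros)
  have intj: "(\<lambda>x. complex_of_real (f x) * ee j x) integrable_on {0..1}" for j
    using theta_int[OF meas L2] .
  have "integral {0..1} (\<lambda>x. complex_of_real (f x) * P x) =
        integral {0..1} (\<lambda>x. \<Sum>j\<in>J. th j * (complex_of_real (f x) * ee j x))"
    unfolding P_def by (simp add: sum_distrib_left mult_ac)
  also have "\<dots> = (\<Sum>j\<in>J. th j * integral {0..1} (\<lambda>x. complex_of_real (f x) * ee j x))"
    using J intj by (simp add: integral_sum integrable_on_mult_right)
  also have "\<dots> = (\<Sum>j\<in>J. th j * cnj (th j))"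
    unfolding th_def using cnj_theta[OF meas L2] by simp
  also have "\<dots> = complex_of_real s"
    unfolding s_def by (simp only: of_real_sum complex_norm_square)
  finally have a1: "integral {0..1} (\<lambda>x. complex_of_real (f x) * P x) = complex_of_real s" .
  have intP: "(\<lambda>x. complex_of_real (f x) * P x) integrable_on {0..1}"
    using f_cont_HK(1)[OF meas L2 Pc] .
  have a2: "integral {0..1} (\<lambda>x. f x * Re (P x)) = s"
    using integral_linear[OF intP bounded_linear_Re] a1 by (simp add: o_def)
  have "((\<lambda>x. \<Sum>j\<in>J. \<Sum>k\<in>J. th j * cnj (th k) * ee (j - k) x) has_integral
         (\<Sum>j\<in>J. \<Sum>k\<in>J. th j * cnj (th k) * (if j - k = 0 then 1 else 0))) {0..1}"
    using J by (intro has_integral_sum has_integral_mult_right has_integral_ee01)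
  moreover have "(\<Sum>j\<in>J. \<Sum>k\<in>J. th j * cnj (th k) * (if j - k = 0 then 1 else 0)) = complex_of_real s"
  proof -
    have "(\<Sum>j\<in>J. \<Sum>k\<in>J. th j * cnj (th k) * (if j - k = 0 then 1 else 0)) =
          (\<Sum>j\<in>J. \<Sum>k\<in>J. if j = k then th j * cnj (th k) else 0)"
      by (intro sum.cong refl) auto
    also have "\<dots> = (\<Sum>j\<in>J. th j * cnj (th j))"
      using J by (simp add: sum.delta)
    finally show ?thesis unfolding s_def by (simp only: of_real_sum complex_norm_square)
  qed
  moreover have "(\<lambda>x. \<Sum>j\<in>J. \<Sum>k\<in>J. th j * cnj (th k) * ee (j - k) x) = (\<lambda>x. complex_of_real ((cmod (P x))\<^sup>2))"
  proof
    fix x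
    have "complex_of_real ((cmod (P x))\<^sup>2) = P x * cnj (P x)" by (rule complex_norm_square)
    also have "\<dots> = (\<Sum>j\<in>J. \<Sum>k\<in>J. th j * ee j x * (cnj (th k) * ee (- k) x))"
      unfolding P_def by (simp add: sum_product cnj_ee)
    also have "\<dots> = (\<Sum>j\<in>J. \<Sum>k\<in>J. th j * cnj (th k) * ee (j - k) x)"
      by (intro sum.cong refl) (simp add: ee_mult mult_ac)
    finally show "(\<Sum>j\<in>J. \<Sum>k\<in>J. th j * cnj (th k) * ee (j - k) x) = complex_of_real ((cmod (P x))\<^sup>2)" by simp
  qed
  ultimately have "((\<lambda>x. complex_of_real ((cmod (P x))\<^sup>2)) has_integral complex_of_real s) {0..1}" by simp
  from has_integral_linear[OF this bounded_linear_Re]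
  have b: "((\<lambda>x. (cmod (P x))\<^sup>2) has_integral s) {0..1}" by (simp add: o_def)
  have ReP: "continuous_on {0..1} (\<lambda>x. Re (P x))"
    by (intro continuous_intros continuous_on_subset[OF Pc]) auto
  have i1: "(\<lambda>x. f x * Re (P x)) integrable_on {0..1}"
    using f_cont_HK(1)[OF meas L2, of "\<lambda>x. Re (P x)"] Pc by (auto intro: continuous_intros)
  have i3: "(\<lambda>x. (Re (P x))\<^sup>2) integrable_on {0..1}"
    by (rule integrable_continuous_real[OF continuous_on_power[OF ReP]])
  have i2: "(\<lambda>x. ((f x)\<^sup>2 + (Re (P x))\<^sup>2) / 2) integrable_on {0..1}"
    using integrable_add[OF f2_HK i3] by (rule integrable_on_divide)
  have c1: "s \<le> integral {0..1} (\<lambda>x. ((f x)\<^sup>2 + (Re (P x))\<^sup>2) / 2)"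
    unfolding a2[symmetric]
  proof (rule integral_le[OF i1 i2])
    fix x
    have "0 \<le> (f x - Re (P x))\<^sup>2" by simp
    then show "f x * Re (P x) \<le> ((f x)\<^sup>2 + (Re (P x))\<^sup>2) / 2"
      by (simp add: power2_eq_square algebra_simps)
  qed
  have c2: "integral {0..1} (\<lambda>x. ((f x)\<^sup>2 + (Re (P x))\<^sup>2) / 2) = (A + integral {0..1} (\<lambda>x. (Re (P x))\<^sup>2)) / 2"
    unfolding A_def using f2_HK i3 integrable_add[OF f2_HK i3]
    by (simp add: integral_add integral_divide)
  have c3: "integral {0..1} (\<lambda>x. (Re (P x))\<^sup>2) \<le> s"
  proof -
    have "integral {0..1} (\<lambda>x. (Re (P x))\<^sup>2) \<le> integral {0..1} (\<lambda>x. (cmod (P x))\<^sup>2)"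
    proof (rule integral_le)
      show "(\<lambda>x. (Re (P x))\<^sup>2) integrable_on {0..1}" by (rule i3)
      show "(\<lambda>x. (cmod (P x))\<^sup>2) integrable_on {0..1}" using b by blast
      fix x show "(Re (P x))\<^sup>2 \<le> (cmod (P x))\<^sup>2"
        using abs_Re_le_cmod[of "P x"] by (metis abs_le_square_iff abs_norm_cancel)
    qed
    then show ?thesis using integral_unique[OF b] by simp
  qed
  have c4: "s \<le> (A + integral {0..1} (\<lambda>x. (Re (P x))\<^sup>2)) / 2" using c1 unfolding c2 .
  have "(A + integral {0..1} (\<lambda>x. (Re (P x))\<^sup>2)) / 2 \<le> (A + s) / 2" using c3 by (simp add: divide_right_mono)
  with c4 have "s \<le> (A + s) / 2" by (rule order_trans)
  then show ?thesis unfolding s_def A_def th_def by simp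
qed

lemma bessel_summable: "(\<lambda>j. (cmod (fourier_coeff f j))\<^sup>2) summable_on UNIV"
proof (rule nonneg_bdd_above_summable_on)
  show "bdd_above (sum (\<lambda>j. (cmod (fourier_coeff f j))\<^sup>2) ` {F. F \<subseteq> UNIV \<and> finite F})"
    using bessel_finite by (auto intro!: bdd_aboveI[of _ "integral {0..1} (\<lambda>x. (f x)\<^sup>2)"])
qed auto

end

lemma inv_sq_int_summable: "(\<lambda>j::int. inverse ((real_of_int j)\<^sup>2)) summable_on UNIV"
proof -
  have n: "(\<lambda>n::nat. inverse ((real n)\<^sup>2)) summable_on UNIV"
    using inverse_power_summable[of 2, where 'a=real] by (subst summable_on_UNIV_nonneg_real_iff) auto
  let ?g = "\<lambda>j::int. inverse ((real_of_int j)\<^sup>2)"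
  have 1: "?g summable_on range int"
    by (subst summable_on_reindex) (use n in \<open>auto simp: o_def inj_on_def\<close>)
  have 2: "?g summable_on range (\<lambda>n. - int n)"
    by (subst summable_on_reindex) (use n in \<open>auto simp: o_def inj_on_def\<close>)
  have U: "UNIV = range int \<union> range (\<lambda>n. - int n)"
  proof -
    have "j \<in> range int \<union> range (\<lambda>n. - int n)" for j :: int
    proof (cases "j \<ge> 0")
      case True then show ?thesis by (intro UnI1 image_eqI[of _ _ "nat j"]) auto
    next
      case False then show ?thesis by (intro UnI2 image_eqI[of _ _ "nat (- j)"]) auto
    qed
    then show ?thesis by auto
  qed
  show ?thesis by (subst U, rule summable_on_union[OF 1 2])
qed

definition acoef :: "(real \<Rightarrow> real) \<Rightarrow> int \<Rightarrow> complex" where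
  "acoef f j = fourier_coeff f j / (complex_of_real (2 * pi * real_of_int j) * \<i>)"

definition Sfun :: "(real \<Rightarrow> real) \<Rightarrow> real \<Rightarrow> complex" where
  "Sfun f x = (\<Sum>\<^sub>\<infinity>j. acoef f j * (ee j x - 1))"

lemma acoef_0 [simp]: "acoef f 0 = 0"
  unfolding acoef_def by simp

context
  fixes f :: "real \<Rightarrow> real"
  assumes meas [measurable]: "f \<in> borel_measurable lborel"
    and L2: "set_integrable lborel {0..1} (\<lambda>x. (f x)\<^sup>2)"
begin

lemma acoef_abs_summable: "(\<lambda>j. norm (acoef f j)) summable_on UNIV"
proof (rule Infinite_Sum.abs_summable_on_comparison_test'[where f="acoef f" and g="\<lambda>j. (cmod (fourier_coeff f j))\<^sup>2 + inverse ((real_of_int j)\<^sup>2)"])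
  show "(\<lambda>j. (cmod (fourier_coeff f j))\<^sup>2 + inverse ((real_of_int j)\<^sup>2)) summable_on UNIV"
    by (rule summable_on_add[OF bessel_summable[OF meas L2] inv_sq_int_summable])
  fix j :: int
  show "norm (acoef f j) \<le> (cmod (fourier_coeff f j))\<^sup>2 + inverse ((real_of_int j)\<^sup>2)"
  proof (cases "j = 0")
    case True then show ?thesis by simp
  next
    case False
    define t where "t = cmod (fourier_coeff f j)"
    define y where "y = inverse \<bar>real_of_int j\<bar>"
    have t0: "t \<ge> 0" unfolding t_def by simp
    have y0: "y \<ge> 0" unfolding y_def by simp
    have "norm (acoef f j) = t / (2 * pi * \<bar>real_of_int j\<bar>)"
      unfolding acoef_def t_def by (simp add: norm_divide norm_mult abs_mult)
    also have "\<dots> \<le> t / \<bar>real_of_int j\<bar>"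
    proof (rule divide_left_mono[OF _ t0])
      have "\<bar>real_of_int j\<bar> \<ge> 1" using False by linarith
      moreover have "2 * pi \<ge> 1" using pi_gt3 by simp
      ultimately show "\<bar>real_of_int j\<bar> \<le> 2 * pi * \<bar>real_of_int j\<bar>"
        by (simp add: mult_le_cancel_right1)
      show "0 < 2 * pi * \<bar>real_of_int j\<bar> * \<bar>real_of_int j\<bar>" using False by simp
    qed
    also have "\<dots> = t * y" unfolding y_def by (simp add: divide_inverse)
    also have "\<dots> \<le> t\<^sup>2 + y\<^sup>2"
    proof -
      have "0 \<le> (t - y)\<^sup>2" by simp
      then have "2 * (t * y) \<le> t\<^sup>2 + y\<^sup>2" by (simp add: power2_eq_square algebra_simps)
      moreover have "0 \<le> t * y" using t0 y0 by simp
      ultimately show ?thesis by linarith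
    qed
    also have "y\<^sup>2 = inverse ((real_of_int j)\<^sup>2)" unfolding y_def by (simp add: power_inverse)
    finally show ?thesis unfolding t_def by simp
  qed
qed

lemma acoef_summable: "acoef f summable_on UNIV"
  using acoef_abs_summable abs_summable_summable by blast

lemma S_terms_bound: "norm (acoef f j * (ee j x - 1) * c) \<le> 2 * norm (acoef f j)" if "norm c \<le> 1" for c
proof -
  have "norm (ee j x - 1) \<le> 2" using norm_triangle_ineq4[of "ee j x" 1] by simp
  then have "norm (ee j x - 1) * norm c \<le> 2 * 1"
    using that by (intro mult_mono) auto
  then have "norm (acoef f j) * (norm (ee j x - 1) * norm c) \<le> norm (acoef f j) * (2 * 1)"
    by (intro mult_left_mono) auto
  then have "norm (acoef f j * (ee j x - 1) * c) \<le> norm (acoef f j) * 2 * 1"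
    by (simp add: norm_mult mult_ac)
  then show ?thesis by simp
qed

lemma M_summable: "(\<lambda>j. 2 * norm (acoef f j)) summable_on UNIV"
  using summable_on_cmult_right[OF acoef_abs_summable] by simp

lemma S_unif:
  "uniform_limit UNIV (\<lambda>X y. \<Sum>j\<in>X. acoef f j * (ee j y - 1) * c y)
      (\<lambda>y. \<Sum>\<^sub>\<infinity>j. acoef f j * (ee j y - 1) * c y) (finite_subsets_at_top UNIV)"
  if "\<And>y. norm (c y) \<le> 1" for c
  by (rule Weierstrass_m_test_general[OF _ M_summable]) (use S_terms_bound that in auto)

lemma S_summable: "(\<lambda>j. acoef f j * (ee j y - 1)) summable_on UNIV"
  by (rule abs_summable_summable, rule Infinite_Sum.abs_summable_on_comparison_test'[OF M_summable])
     (use S_terms_bound[of 1] in auto)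

lemma S_cont: "continuous_on UNIV (Sfun f)"
proof -
  have "uniform_limit UNIV (\<lambda>X y. \<Sum>j\<in>X. acoef f j * (ee j y - 1) * 1)
      (\<lambda>y. \<Sum>\<^sub>\<infinity>j. acoef f j * (ee j y - 1) * 1) (finite_subsets_at_top UNIV)"
    by (rule S_unif) simp
  then have "uniform_limit UNIV (\<lambda>X y. \<Sum>j\<in>X. acoef f j * (ee j y - 1)) (Sfun f) (finite_subsets_at_top UNIV)"
    unfolding Sfun_def[abs_def] by simp
  then show ?thesis
    by (rule uniform_limit_theorem[rotated]) (auto intro!: always_eventually continuous_intros simp: finite_subsets_at_top_neq_bot)
qed

lemma S_0 [simp]: "Sfun f 0 = 0" and S_1 [simp]: "Sfun f 1 = 0"
  unfolding Sfun_def by simp_all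

lemma S_coeff:
  assumes k: "k \<noteq> 0"
  shows "((\<lambda>x. Sfun f x * ee (-k) x) has_integral acoef f k) {0..1}"
proof -
  have u: "uniform_limit {0..1} (\<lambda>X y. \<Sum>j\<in>X. acoef f j * (ee j y - 1) * ee (-k) y)
      (\<lambda>y. \<Sum>\<^sub>\<infinity>j. acoef f j * (ee j y - 1) * ee (-k) y) (finite_subsets_at_top UNIV)"
    by (rule uniform_limit_on_subset[OF S_unif]) auto
  have lim_eq: "(\<lambda>y. \<Sum>\<^sub>\<infinity>j. acoef f j * (ee j y - 1) * ee (-k) y) = (\<lambda>y. Sfun f y * ee (-k) y)"
    unfolding Sfun_def by (intro ext infsum_cmult_left) (use S_summable in auto)
  obtain I J where IJ: "\<And>X. ((\<lambda>y. \<Sum>j\<in>X. acoef f j * (ee j y - 1) * ee (-k) y) has_integral I X) {0..1}"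
    "((\<lambda>y. \<Sum>\<^sub>\<infinity>j. acoef f j * (ee j y - 1) * ee (-k) y) has_integral J) {0..1}"
    "(I \<longlongrightarrow> J) (finite_subsets_at_top UNIV)"
    by (rule uniform_limit_integral[OF u]) (auto intro!: continuous_intros simp: finite_subsets_at_top_neq_bot)
  have Iv: "I X = (\<Sum>j\<in>X. if j = k then acoef f j else 0)" if "finite X" for X
  proof -
    have "((\<lambda>y. acoef f j * (ee j y - 1) * ee (-k) y) has_integral (if j = k then acoef f j else 0)) {0..1}" for j
    proof -
      have e: "(\<lambda>y. acoef f j * (ee j y - 1) * ee (-k) y) = (\<lambda>y. acoef f j * (ee (j - k) y - ee (-k) y))"
        by (rule ext) (simp add: algebra_simps ee_mult)
      have hi: "((\<lambda>y. acoef f j * (ee (j - k) y - ee (-k) y)) has_integral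
             acoef f j * ((if j - k = 0 then 1 else 0) - (if -k = 0 then 1 else 0))) {0..1}"
        by (intro has_integral_mult_right has_integral_diff has_integral_ee01)
      have v: "acoef f j * ((if j - k = 0 then 1 else 0) - (if -k = 0 then 1 else 0)) = (if j = k then acoef f j else 0)"
        using k by auto
      show ?thesis unfolding e v[symmetric] by (rule hi)
    qed
    then have "((\<lambda>y. \<Sum>j\<in>X. acoef f j * (ee j y - 1) * ee (-k) y) has_integral
       (\<Sum>j\<in>X. if j = k then acoef f j else 0)) {0..1}"
      using that by (intro has_integral_sum) auto
    then show ?thesis using IJ(1)[of X] has_integral_unique by blast
  qed
  have "((\<lambda>j. if j = k then acoef f j else 0) has_sum acoef f k) UNIV"
    by (rule has_sum_finite_neutralI[of "{k}"]) auto
  then have "((\<lambda>X. \<Sum>j\<in>X. if j = k then acoef f j else 0) \<longlongrightarrow> acoef f k) (finite_subsets_at_top UNIV)"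
    unfolding has_sum_def .
  moreover have ev: "\<forall>\<^sub>F X in finite_subsets_at_top UNIV. I X = (\<Sum>j\<in>X. if j = k then acoef f j else 0)"
    by (rule eventually_finite_subsets_at_top_weakI) (rule Iv)
  ultimately have "(I \<longlongrightarrow> acoef f k) (finite_subsets_at_top UNIV)"
    by (subst tendsto_cong[OF ev])
  then have "J = acoef f k" by (rule tendsto_unique[OF finite_subsets_at_top_neq_bot IJ(3)])
  then show ?thesis using IJ(2) lim_eq by simp
qed

end

definition Gfun :: "(real \<Rightarrow> real) \<Rightarrow> real \<Rightarrow> real" where
  "Gfun f x = (LINT t:{0..x}|lborel. f t)"

lemma ee_meas [measurable]: "ee k \<in> borel_measurable borel"
  by (rule borel_measurable_continuous_onI[OF continuous_on_ee])

lemma theta_LINT: "fourier_coeff f k = (CLINT t:{0..1}|lborel. complex_of_real (f t) * ee (-k) t)"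
  unfolding fourier_coeff_def ee_def by (simp add: algebra_simps)

context
  fixes f :: "real \<Rightarrow> real"
  assumes meas [measurable]: "f \<in> borel_measurable lborel"
    and L2: "set_integrable lborel {0..1} (\<lambda>x. (f x)\<^sup>2)"
begin

lemma G_HK: "x \<in> {0..1} \<Longrightarrow> Gfun f x = integral {0..x} f"
  unfolding Gfun_def
  by (rule set_borel_integral_eq_integral(2), rule set_integrable_subset[OF f_int[OF meas L2]]) auto

lemma G_cont: "continuous_on {0..1} (Gfun f)"
proof -
  have "f integrable_on {0..1}" using f_int[OF meas L2] set_borel_integral_eq_integral(1) by blast
  from indefinite_integral_continuous_1[OF this]
  show ?thesis by (rule continuous_on_cong[THEN iffD1, rotated 2]) (auto simp: G_HK)
qed

lemma G_0 [simp]: "Gfun f 0 = 0"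
  using G_HK[of 0] by simp

lemma G_1: assumes "fourier_coeff f 0 = 0" shows "Gfun f 1 = 0"
proof -
  have "fourier_coeff f 0 = complex_of_real (Gfun f 1)"
    unfolding theta_LINT Gfun_def by (simp add: set_integral_complex_of_real)
  then show ?thesis using assms by simp
qed

end

context
  fixes f :: "real \<Rightarrow> real"
  assumes meas [measurable]: "f \<in> borel_measurable lborel"
    and L2: "set_integrable lborel {0..1} (\<lambda>x. (f x)\<^sup>2)"
begin

lemma G_coeff:
  assumes th0: "fourier_coeff f 0 = 0" and k: "k \<noteq> 0"
  shows "((\<lambda>x. complex_of_real (Gfun f x) * ee (-k) x) has_integral acoef f k) {0..1}"
proof -
  define c where "c = complex_of_real (2 * pi * real_of_int (-k)) * \<i>"
  have c0: "c \<noteq> 0" using k by (simp add: c_def)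
  define H where "H x t = (if 0 \<le> t \<and> t \<le> x \<and> x \<le> 1 then complex_of_real (f t) * ee (-k) x else 0)" for x t
  define D where "D x t = indicator {0..1::real} x * (indicator {0..1::real} t * \<bar>f t\<bar>)" for x t
  define C where "C = (LBINT t. indicator {0..1::real} t * \<bar>f t\<bar>)"
  have fabs: "integrable lborel (\<lambda>t. indicator {0..1::real} t * \<bar>f t\<bar>)"
    using set_integrable_abs[OF f_int[OF meas L2]] unfolding set_integrable_def by simp
  have Hm: "(\<lambda>(x, t). H x t) \<in> borel_measurable (lborel \<Otimes>\<^sub>M lborel)"
    unfolding H_def by measurable
  have Dm: "(\<lambda>(x, t). D x t) \<in> borel_measurable (lborel \<Otimes>\<^sub>M lborel)"
    unfolding D_def by measurable
  have Dint: "integrable (lborel \<Otimes>\<^sub>M lborel) (\<lambda>(x, t). D x t)"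
  proof (rule lborel_pair.Fubini_integrable)
    show "(\<lambda>(x, t). D x t) \<in> borel_measurable (lborel \<Otimes>\<^sub>M lborel)" by (rule Dm)
    have "(\<lambda>x. LBINT y. norm ((\<lambda>(x, t). D x t) (x, y))) = (\<lambda>x. indicator {0..1::real} x * C)"
      unfolding D_def C_def by (simp add: abs_mult)
    moreover have "integrable lborel (\<lambda>x. indicator {0..1::real} x * C)"
      by (intro integrable_mult_left integrable_real_indicator) auto
    ultimately show "integrable lborel (\<lambda>x. LBINT y. norm ((\<lambda>(x, t). D x t) (x, y)))" by simp
    show "AE x in lborel. integrable lborel (\<lambda>y. (\<lambda>(x, t). D x t) (x, y))"
      unfolding D_def using fabs by (auto intro!: integrable_mult_right)
  qed
  have Hint: "integrable (lborel \<Otimes>\<^sub>M lborel) (\<lambda>(x, t). H x t)"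
  proof (rule Bochner_Integration.integrable_bound[OF Dint Hm], rule AE_I2)
    fix p :: "real \<times> real"
    obtain x t where p: "p = (x, t)" by (cases p)
    show "norm ((\<lambda>(x, t). H x t) p) \<le> norm ((\<lambda>(x, t). D x t) p)"
      unfolding p H_def D_def by (auto simp: norm_mult indicator_def)
  qed
  from lborel_pair.Fubini_integral[OF Hint]
  have fub: "(LBINT t. LBINT x. H x t) = (LBINT x. LBINT t. H x t)" .
  have inner1: "(LBINT t. H x t) = indicator {0..1} x *\<^sub>R (complex_of_real (Gfun f x) * ee (-k) x)" for x
  proof (cases "x \<in> {0..1}")
    case True
    have "(LBINT t. H x t) = (LBINT t. indicator {0..x} t *\<^sub>R (complex_of_real (f t) * ee (-k) x))"
      unfolding H_def using True by (intro Bochner_Integration.integral_cong) (auto simp: indicator_def)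
    also have "\<dots> = (CLINT t:{0..x}|lborel. complex_of_real (f t) * ee (-k) x)"
      unfolding set_lebesgue_integral_def ..
    also have "\<dots> = (CLINT t:{0..x}|lborel. complex_of_real (f t)) * ee (-k) x"
      by (rule set_integral_mult_left)
    also have "\<dots> = complex_of_real (Gfun f x) * ee (-k) x"
      unfolding Gfun_def by (simp add: set_integral_complex_of_real)
    finally show ?thesis using True by simp
  next
    case False
    then have "H x t = 0" for t unfolding H_def by auto
    then show ?thesis using False by simp
  qed
  have RHS: "(LBINT x. LBINT t. H x t) = (CLINT x:{0..1}|lborel. complex_of_real (Gfun f x) * ee (-k) x)"
    unfolding inner1 set_lebesgue_integral_def ..
  have inner2: "(LBINT x. H x t) = indicator {0..1} t *\<^sub>R (complex_of_real (f t) * ((1 - ee (-k) t) / c))" for t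
  proof (cases "t \<in> {0..1}")
    case True
    have "(LBINT x. H x t) = (LBINT x. indicator {t..1} x *\<^sub>R (complex_of_real (f t) * ee (-k) x))"
      unfolding H_def using True by (intro Bochner_Integration.integral_cong) (auto simp: indicator_def)
    also have "\<dots> = (CLINT x:{t..1}|lborel. complex_of_real (f t) * ee (-k) x)"
      unfolding set_lebesgue_integral_def ..
    also have "\<dots> = complex_of_real (f t) * (CLINT x:{t..1}|lborel. ee (-k) x)"
      by (rule set_integral_mult_right)
    also have "(CLINT x:{t..1}|lborel. ee (-k) x) = integral {t..1} (ee (-k))"
      by (rule set_borel_integral_eq_integral(2))
         (simp add: set_integrable_def borel_integrable_compact continuous_on_ee)
    also have "\<dots> = (ee (-k) 1 - ee (-k) t) / c"
      unfolding c_def using True k by (intro integral_unique has_integral_ee) auto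
    finally show ?thesis using True by simp
  next
    case False
    then have "H x t = 0" for x unfolding H_def by auto
    then show ?thesis using False by simp
  qed
  have i1: "set_integrable lborel {0..1} (\<lambda>t. complex_of_real (f t) * 1)"
    by (rule f_cont_int[OF meas L2]) simp
  have i2: "set_integrable lborel {0..1} (\<lambda>t. complex_of_real (f t) * ee (-k) t)"
    by (rule f_cont_int[OF meas L2]) (rule continuous_on_ee)
  have "(LBINT t. LBINT x. H x t) = (CLINT t:{0..1}|lborel. complex_of_real (f t) * ((1 - ee (-k) t) / c))"
    unfolding inner2 set_lebesgue_integral_def ..
  also have "\<dots> = (CLINT t:{0..1}|lborel. (complex_of_real (f t) * 1 - complex_of_real (f t) * ee (-k) t) / c)"
    by (simp add: algebra_simps diff_divide_distrib)
  also have "\<dots> = ((CLINT t:{0..1}|lborel. complex_of_real (f t) * 1) - (CLINT t:{0..1}|lborel. complex_of_real (f t) * ee (-k) t)) / c"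
    using set_integral_diff(2)[OF i1 i2] by simp
  also have "(CLINT t:{0..1}|lborel. complex_of_real (f t) * 1) = fourier_coeff f 0"
    unfolding theta_LINT by simp
  also have "(CLINT t:{0..1}|lborel. complex_of_real (f t) * ee (-k) t) = fourier_coeff f k"
    unfolding theta_LINT ..
  finally have LHS: "(LBINT t. LBINT x. H x t) = - fourier_coeff f k / c" using th0 by simp
  have "(CLINT x:{0..1}|lborel. complex_of_real (Gfun f x) * ee (-k) x) = acoef f k"
    using fub LHS RHS c0 unfolding acoef_def c_def by (simp add: divide_simps)
  moreover have "set_integrable lborel {0..1} (\<lambda>x. complex_of_real (Gfun f x) * ee (-k) x)"
    by (rule set_integrable_cont01) (intro continuous_intros G_cont[OF meas L2])
  ultimately show ?thesis
    using set_borel_integral_eq_integral by (metis has_integral_integral)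
qed

end

lemma trig_unique_c:
  fixes h :: "real \<Rightarrow> complex"
  assumes cont: "continuous_on {0..1} h" and per: "h 0 = h 1"
    and coef: "\<And>k. ((\<lambda>x. h x * ee k x) has_integral 0) {0..1}"
    and x: "x \<in> {0..1}"
  shows "h x = 0"
proof -
  have cc: "((\<lambda>x. cnj (h x) * ee k x) has_integral 0) {0..1}" for k
  proof -
    have "((\<lambda>x. cnj (h x * ee (-k) x)) has_integral cnj 0) {0..1}"
      using has_integral_linear[OF coef[of "-k"] bounded_linear_cnj] by (simp add: o_def)
    then show ?thesis by (simp add: cnj_ee)
  qed
  have re: "Re (h x) = 0"
  proof (rule trig_unique[of "\<lambda>x. Re (h x)"])
    show "continuous_on {0..1} (\<lambda>x. Re (h x))" by (intro continuous_intros cont)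
    show "Re (h 0) = Re (h 1)" using per by simp
    fix k
    have "((\<lambda>x. (h x * ee k x + cnj (h x) * ee k x) / 2) has_integral (0 + 0) / 2) {0..1}"
      by (intro has_integral_divide has_integral_add coef cc)
    moreover have "(h y * ee k y + cnj (h y) * ee k y) / 2 = complex_of_real (Re (h y)) * ee k y" for y
    proof -
      have "(h y * ee k y + cnj (h y) * ee k y) / 2 = (h y + cnj (h y)) * ee k y / 2" by (simp add: algebra_simps)
      also have "\<dots> = complex_of_real (2 * Re (h y)) * ee k y / 2" by (simp only: complex_add_cnj)
      finally show ?thesis by simp
    qed
    ultimately show "((\<lambda>x. complex_of_real (Re (h x)) * ee k x) has_integral 0) {0..1}" by simp
  qed (rule x)
  have im: "Im (h x) = 0"
  proof (rule trig_unique[of "\<lambda>x. Im (h x)"])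
    show "continuous_on {0..1} (\<lambda>x. Im (h x))" by (intro continuous_intros cont)
    show "Im (h 0) = Im (h 1)" using per by simp
    fix k
    have "((\<lambda>x. (h x * ee k x - cnj (h x) * ee k x) / (2 * \<i>)) has_integral (0 - 0) / (2 * \<i>)) {0..1}"
      by (intro has_integral_divide has_integral_diff coef cc)
    moreover have "(h y * ee k y - cnj (h y) * ee k y) / (2 * \<i>) = complex_of_real (Im (h y)) * ee k y" for y
    proof -
      have "h y * ee k y - cnj (h y) * ee k y = (h y - cnj (h y)) * ee k y" by (simp add: algebra_simps)
      also have "\<dots> = (complex_of_real (Im (h y)) * ee k y) * (2 * \<i>)" by (simp add: complex_diff_cnj mult_ac)
      finally show ?thesis by (simp only:) (rule nonzero_mult_div_cancel_right, simp)
    qed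
    ultimately show "((\<lambda>x. complex_of_real (Im (h x)) * ee k x) has_integral 0) {0..1}" by simp
  qed (rule x)
  show ?thesis using re im by (simp add: complex_eq_iff)
qed

context
  fixes f :: "real \<Rightarrow> real"
  assumes meas [measurable]: "f \<in> borel_measurable lborel"
    and L2: "set_integrable lborel {0..1} (\<lambda>x. (f x)\<^sup>2)"
    and th0: "fourier_coeff f 0 = 0"
begin

lemma G_eq_S:
  assumes x: "x \<in> {0..1}"
  shows "complex_of_real (Gfun f x) = Sfun f x"
proof -
  define D where "D y = complex_of_real (Gfun f y) - Sfun f y" for y
  have Dc: "continuous_on {0..1} D"
    unfolding D_def by (intro continuous_intros G_cont[OF meas L2] continuous_on_subset[OF S_cont[OF meas L2]]) auto
  define d0 where "d0 = integral {0..1} D"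
  have Dint: "(D has_integral d0) {0..1}"
    unfolding d0_def using integrable_continuous_real[OF Dc] by (rule has_integral_integral[THEN iffD1])
  have Dk: "((\<lambda>y. D y * ee (-k) y) has_integral 0) {0..1}" if k: "k \<noteq> 0" for k
  proof -
    have "((\<lambda>y. complex_of_real (Gfun f y) * ee (-k) y - Sfun f y * ee (-k) y) has_integral acoef f k - acoef f k) {0..1}"
      by (intro has_integral_diff G_coeff[OF meas L2 th0 k] S_coeff[OF meas L2 k])
    then show ?thesis unfolding D_def by (simp add: algebra_simps)
  qed
  have coef: "((\<lambda>y. (D y - d0) * ee k y) has_integral 0) {0..1}" for k
  proof (cases "k = 0")
    case True
    have "((\<lambda>y. D y - d0) has_integral d0 - d0) {0..1}"
      using has_integral_diff[OF Dint has_integral_const_real[of d0 0 1]] by simp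
    then show ?thesis using True by simp
  next
    case False
    have "((\<lambda>y. D y * ee (-(-k)) y - d0 * ee k y) has_integral 0 - d0 * 0) {0..1}"
      using False by (intro has_integral_diff Dk has_integral_mult_right) (auto intro: has_integral_ee01[of k, simplified False if_False])
    then show ?thesis by (simp add: algebra_simps)
  qed
  have D0: "D 0 = 0" unfolding D_def by (simp add: G_0[OF meas L2] S_0[OF meas L2])
  have D1: "D 1 = 0" unfolding D_def using G_1[OF meas L2 th0] by (simp add: S_1[OF meas L2])
  have "D y - d0 = 0" if "y \<in> {0..1}" for y
    by (rule trig_unique_c[OF _ _ coef that]) (use Dc D0 D1 in \<open>auto intro!: continuous_intros\<close>)
  then have "D x = d0" "D 0 = d0" using x by auto
  then have "D x = 0" using D0 by simp
  then show ?thesis unfolding D_def by simp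
qed

end

lemma has_sum_sum_fin:
  fixes g :: "'i \<Rightarrow> 'a \<Rightarrow> complex"
  assumes "finite I" "\<And>i. i \<in> I \<Longrightarrow> (g i has_sum s i) A"
  shows "((\<lambda>x. \<Sum>i\<in>I. g i x) has_sum (\<Sum>i\<in>I. s i)) (A :: 'a set)"
  using assms
proof (induction I rule: finite_induct)
  case empty
  then show ?case by simp
next
  case (insert i I)
  then have "((\<lambda>x. g i x + (\<Sum>i\<in>I. g i x)) has_sum (s i + (\<Sum>i\<in>I. s i))) A"
    by (intro has_sum_add) auto
  then show ?case using insert by simp
qed

lemma has_sum_diff':
  fixes f g :: "'a \<Rightarrow> complex"
  assumes "(f has_sum a) A" "(g has_sum b) A"
  shows "((\<lambda>x. f x - g x) has_sum (a - b)) A"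
  using has_sum_add[OF assms(1) has_sum_uminusI[OF assms(2)]] by simp

lemma abs_summable_prod:
  fixes x y :: "'a \<Rightarrow> complex"
  assumes x: "(\<lambda>j. norm (x j)) summable_on UNIV" and y: "(\<lambda>j. norm (y j)) summable_on UNIV"
  shows "(\<lambda>p. norm ((\<lambda>(j, k). x j * y k) p)) summable_on UNIV"
proof -
  have "(\<lambda>p. norm ((\<lambda>(j, k). x j * y k) p)) summable_on Sigma UNIV (\<lambda>_. UNIV)"
  proof (subst Infinite_Sum.abs_summable_on_Sigma_iff, intro conjI ballI)
    fix j :: 'a
    show "(\<lambda>k. norm ((\<lambda>(j, k). x j * y k) (j, k))) summable_on UNIV"
      using summable_on_cmult_right[OF y, of "norm (x j)"] by (simp add: norm_mult)
  next
    have "(\<lambda>j. \<Sum>\<^sub>\<infinity>k. norm ((\<lambda>(j, k). x j * y k) (j, k))) = (\<lambda>j. norm (x j) * (\<Sum>\<^sub>\<infinity>k. norm (y k)))"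
      by (simp add: norm_mult infsum_cmult_right')
    moreover have "(\<lambda>j. norm (x j) * (\<Sum>\<^sub>\<infinity>k. norm (y k))) summable_on UNIV"
      by (rule summable_on_cmult_left[OF x])
    ultimately show "(\<lambda>j. norm (\<Sum>\<^sub>\<infinity>k. norm ((\<lambda>(j, k). x j * y k) (j, k)))) summable_on UNIV"
      by (simp add: infsum_nonneg)
  qed
  then show ?thesis by simp
qed

lemma has_sum_prod:
  fixes x y :: "'a \<Rightarrow> complex"
  assumes x: "(\<lambda>j. norm (x j)) summable_on UNIV" and y: "(\<lambda>j. norm (y j)) summable_on UNIV"
  shows "((\<lambda>(j, k). x j * y k) has_sum (infsum x UNIV * infsum y UNIV)) UNIV"
proof -
  have s: "(\<lambda>(j, k). x j * y k) summable_on Sigma UNIV (\<lambda>_. UNIV)"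
    using abs_summable_summable[OF abs_summable_prod[OF x y]] by simp
  have "infsum (\<lambda>(j, k). x j * y k) (Sigma UNIV (\<lambda>_. UNIV)) = (\<Sum>\<^sub>\<infinity>j. \<Sum>\<^sub>\<infinity>k. x j * y k)"
    using infsum_Sigma_banach[OF s] by simp
  also have "\<dots> = (\<Sum>\<^sub>\<infinity>j. x j * infsum y UNIV)"
    by (simp add: infsum_cmult_right')
  also have "\<dots> = infsum x UNIV * infsum y UNIV"
    by (simp add: infsum_cmult_left')
  finally show ?thesis using s by (simp add: has_sum_iff)
qed

lemma ee_pow: "ee d (real l * x) = ee d x ^ l"
proof (induction l)
  case 0 then show ?case by simp
next
  case (Suc l)
  have "ee d (real (Suc l) * x) = ee d (real l * x + x)" by (simp add: algebra_simps)
  then show ?case using Suc by (simp add: ee_add mult.commute)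
qed

lemma ee_eq_1_iff:
  assumes m: "m \<ge> (1::nat)"
  shows "ee d (1 / real m) = 1 \<longleftrightarrow> int m dvd d"
proof
  assume "ee d (1 / real m) = 1"
  then obtain n :: int where "2 * pi * real_of_int d * (1 / real m) = real_of_int (2 * n) * pi"
    unfolding ee_def exp_eq_1 by auto
  then have "(2 * pi) * (real_of_int d / real m) = (2 * pi) * real_of_int n" by (simp add: algebra_simps)
  then have "real_of_int d / real m = real_of_int n"
    using mult_cancel_left[of "2 * pi" "real_of_int d / real m" "real_of_int n"] by simp
  then have "real_of_int d = real_of_int n * real m" using m by (simp add: field_simps)
  then have "d = n * int m" by (metis of_int_eq_iff of_int_mult of_int_of_nat_eq)
  then show "int m dvd d" by simp
next
  assume "int m dvd d"
  then obtain n where "d = int m * n" by blast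
  then have "2 * pi * real_of_int d * (1 / real m) = 2 * real_of_int n * pi" using m by (simp add: field_simps)
  moreover have "exp (complex_of_real (2 * real_of_int n * pi) * \<i>) = 1" by (rule exp_integer_2pi) simp
  ultimately show "ee d (1 / real m) = 1" unfolding ee_def by simp
qed

lemma geom_ee:
  assumes m: "m \<ge> (1::nat)"
  shows "(\<Sum>l=1..m. ee d ((real l - 1) / real m)) = (if int m dvd d then of_nat m else 0)"
proof -
  define w where "w = ee d (1 / real m)"
  have "(\<Sum>l=1..m. ee d ((real l - 1) / real m)) = (\<Sum>l<m. ee d (real l * (1 / real m)))"
  proof -
    have "(\<Sum>l=1..m. ee d ((real l - 1) / real m)) = (\<Sum>l<m. ee d ((real (Suc l) - 1) / real m))"
      by (simp add: sum.atLeast1_atMost_eq)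
    then show ?thesis by simp
  qed
  also have "\<dots> = (\<Sum>l<m. w ^ l)" unfolding w_def by (intro sum.cong refl) (rule ee_pow)
  also have "\<dots> = (if int m dvd d then of_nat m else 0)"
  proof (cases "int m dvd d")
    case True
    then have "w = 1" unfolding w_def using ee_eq_1_iff[OF m] by simp
    then show ?thesis using True by simp
  next
    case False
    then have w1: "w \<noteq> 1" unfolding w_def using ee_eq_1_iff[OF m] by simp
    have "w ^ m = ee d (real m * (1 / real m))" unfolding w_def by (rule ee_pow[symmetric])
    also have "\<dots> = 1" using m by simp
    finally have "w ^ m = 1" .
    then show ?thesis using geometric_sum[OF w1, of m] False by simp
  qed
  finally show ?thesis .
qed

lemma ee_minus1_sq: "(ee j x - 1) * cnj (ee j x - 1) = complex_of_real (2 - 2 * cos (2 * pi * real_of_int j * x))"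
proof -
  have "(ee j x - 1) * cnj (ee j x - 1) = ee j x * cnj (ee j x) - (ee j x + cnj (ee j x)) + 1"
    by (simp add: algebra_simps)
  also have "ee j x * cnj (ee j x) = 1"
    using complex_norm_square[of "ee j x"] by simp
  also have "ee j x + cnj (ee j x) = complex_of_real (2 * Re (ee j x))" by (rule complex_add_cnj)
  also have "Re (ee j x) = cos (2 * pi * real_of_int j * x)"
    unfolding ee_def by (simp add: Re_exp)
  finally show ?thesis by simp
qed

lemma acoef_prod:
  "acoef f j * cnj (acoef f j') =
     fourier_coeff f j * cnj (fourier_coeff f j') / complex_of_real (4 * pi\<^sup>2 * real_of_int j * real_of_int j')"
proof (cases "j = 0 \<or> j' = 0")
  case True
  then show ?thesis unfolding acoef_def by auto
next
  case False
  define A where "A = complex_of_real (2 * pi * real_of_int j)"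
  define B where "B = complex_of_real (2 * pi * real_of_int j')"
  have A: "A \<noteq> 0" and B: "B \<noteq> 0" using False by (auto simp: A_def B_def)
  have AB: "complex_of_real (4 * pi\<^sup>2 * real_of_int j * real_of_int j') = A * B"
    unfolding A_def B_def by (simp add: power2_eq_square)
  have "acoef f j * cnj (acoef f j') = fourier_coeff f j / (A * \<i>) * (cnj (fourier_coeff f j') / (- (B * \<i>)))"
    unfolding acoef_def A_def B_def by (simp add: complex_cnj_divide)
  also have "\<dots> = fourier_coeff f j * cnj (fourier_coeff f j') / (A * B)"
    using A B by (simp add: field_simps)
  finally show ?thesis unfolding AB .
qed

theorem lemma7:
  fixes f F :: "real \<Rightarrow> real" and n m :: nat
  assumes periodic: "\<forall>x. f (x + 1) = f x"
    and meas: "f \<in> borel_measurable lborel"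
    and L2: "set_integrable lborel {0..1} (\<lambda>x. (f x)\<^sup>2)"
    and dens_nonneg: "AE x in lborel. x \<in> {0..1} \<longrightarrow> 0 \<le> 1 + f x"
    and F_def: "\<forall>x\<in>{0..1}. F x = (LINT t:{0..x}|lborel. 1 + f t)"
    and theta0: "fourier_coeff f 0 = 0"
    and n: "n \<ge> 1" and m: "m \<ge> 1"
  shows "complex_of_real (T_stat n m F / (real n * real m)) =
    of_nat m * (\<Sum>\<^sub>\<infinity>k::int. \<Sum>\<^sub>\<infinity>j\<in>{j::int. j \<noteq> k * int m}.
        fourier_coeff f j * cnj (fourier_coeff f (j - k * int m))
        / complex_of_real (4 * pi\<^sup>2 * of_int j * of_int (j - k * int m))
        * complex_of_real (2 - 2 * cos (2 * pi * of_int j / real m)))"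
proof -
  note meas[measurable]
  define a where "a = acoef f"
  define c where "c j = complex_of_real (2 - 2 * cos (2 * pi * real_of_int j / real m))" for j :: int
  define T where "T p = (case p of (j, j') \<Rightarrow>
      if int m dvd (j - j') then of_nat m * (a j * cnj (a j')) * c j else 0)" for p :: "int \<times> int"
  define z where "z l = cell_prob F m l - 1 / real m" for l
  have m0: "real m > 0" using m by simp
  have Fx: "F x = x + Gfun f x" if x: "x \<in> {0..1}" for x
  proof -
    have fi: "set_integrable lborel {0..x} f"
      by (rule set_integrable_subset[OF f_int[OF meas L2]]) (use x in auto)
    have oi: "set_integrable lborel {0..x} (\<lambda>t. 1::real)"
      unfolding set_integrable_def by (rule borel_integrable_compact) auto
    have "F x = (LINT t:{0..x}|lborel. 1 + f t)" using F_def x by simp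
    also have "\<dots> = (LINT t:{0..x}|lborel. 1) + (LINT t:{0..x}|lborel. f t)"
      by (rule set_integral_add(2)[OF oi fi])
    also have "(LINT t:{0..x}|lborel. (1::real)) = integral {0..x} (\<lambda>t. 1)"
      by (rule set_borel_integral_eq_integral(2)[OF oi])
    also have "\<dots> = x" using x by simp
    finally show ?thesis unfolding Gfun_def .
  qed
  have zl: "z l = Gfun f (real l / real m) - Gfun f ((real l - 1) / real m)" if l: "l \<in> {1..m}" for l
  proof -
    have "real l / real m \<in> {0..1}" "(real l - 1) / real m \<in> {0..1}" using l m0 by (auto simp: field_simps)
    then show ?thesis unfolding z_def cell_prob_def using Fx m0 by (simp add: field_simps)
  qed
  define w where "w l j = a j * (ee j (real l / real m) - ee j ((real l - 1) / real m))" for l :: nat and j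
  have wabs: "(\<lambda>j. norm (w l j)) summable_on UNIV" for l
  proof (rule Infinite_Sum.abs_summable_on_comparison_test'[OF M_summable[OF meas L2]])
    fix j
    have "norm (ee j (real l / real m) - ee j ((real l - 1) / real m)) \<le> 2"
      using norm_triangle_ineq4[of "ee j (real l / real m)" "ee j ((real l - 1) / real m)"] by simp
    then have "norm (acoef f j) * norm (ee j (real l / real m) - ee j ((real l - 1) / real m)) \<le> norm (acoef f j) * 2"
      by (rule mult_left_mono) simp
    then show "norm (w l j) \<le> 2 * norm (acoef f j)"
      unfolding w_def a_def by (simp add: norm_mult mult.commute)
  qed
  have zw: "(w l has_sum complex_of_real (z l)) UNIV" if l: "l \<in> {1..m}" for l
  proof -
    have "real l / real m \<in> {0..1}" "(real l - 1) / real m \<in> {0..1}" using l m0 by (auto simp: field_simps)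
    then have "complex_of_real (z l) = Sfun f (real l / real m) - Sfun f ((real l - 1) / real m)"
      using zl[OF l] G_eq_S[OF meas L2 theta0] by simp
    moreover have "((\<lambda>j. acoef f j * (ee j (real l / real m) - 1) - acoef f j * (ee j ((real l - 1) / real m) - 1))
        has_sum (Sfun f (real l / real m) - Sfun f ((real l - 1) / real m))) UNIV"
      unfolding Sfun_def by (intro has_sum_diff' has_sum_infsum S_summable[OF meas L2])
    moreover have "(\<lambda>j. acoef f j * (ee j (real l / real m) - 1) - acoef f j * (ee j ((real l - 1) / real m) - 1)) = w l"
      unfolding w_def a_def by (auto simp: algebra_simps)
    ultimately show ?thesis by simp
  qed
  have sq: "((\<lambda>(j, j'). w l j * cnj (w l j')) has_sum complex_of_real ((z l)\<^sup>2)) UNIV" if l: "l \<in> {1..m}" for l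
  proof -
    have c1: "(\<lambda>j. norm (cnj (w l j))) summable_on UNIV" using wabs[of l] by simp
    have "((\<lambda>(j, j'). w l j * cnj (w l j')) has_sum (infsum (w l) UNIV * infsum (\<lambda>j. cnj (w l j)) UNIV)) UNIV"
      by (rule has_sum_prod[OF wabs c1])
    moreover have "infsum (w l) UNIV = complex_of_real (z l)" using zw[OF l] by (simp add: infsumI)
    moreover have "infsum (\<lambda>j. cnj (w l j)) UNIV = complex_of_real (z l)"
      using zw[OF l] by (simp add: infsum_cnj infsumI)
    ultimately show ?thesis by (simp add: power2_eq_square)
  qed
  have tot: "((\<lambda>p. \<Sum>l=1..m. (\<lambda>(j, j'). w l j * cnj (w l j')) p) has_sum (\<Sum>l=1..m. complex_of_real ((z l)\<^sup>2))) UNIV"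
    by (rule has_sum_sum_fin) (use sq in auto)
  have tform: "(\<Sum>l=1..m. (\<lambda>(j, j'). w l j * cnj (w l j')) p) = T p" for p
  proof -
    obtain j j' where p: "p = (j, j')" by (cases p)
    define E where "E i = ee i (1 / real m)" for i
    have wl: "w l i = a i * (E i - 1) * ee i ((real l - 1) / real m)" for l i
    proof -
      have "ee i (real l / real m) = ee i ((real l - 1) / real m + 1 / real m)"
        by (simp add: diff_divide_distrib)
      then show ?thesis unfolding w_def E_def by (simp add: ee_add algebra_simps)
    qed
    have "(\<Sum>l=1..m. w l j * cnj (w l j')) =
        (\<Sum>l=1..m. (a j * cnj (a j') * ((E j - 1) * cnj (E j' - 1))) * ee (j - j') ((real l - 1) / real m))"
    proof (intro sum.cong refl)
      fix l
      have "ee j ((real l - 1) / real m) * cnj (ee j' ((real l - 1) / real m)) = ee (j - j') ((real l - 1) / real m)"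
        by (simp add: cnj_ee ee_mult)
      then show "w l j * cnj (w l j') = (a j * cnj (a j') * ((E j - 1) * cnj (E j' - 1))) * ee (j - j') ((real l - 1) / real m)"
        unfolding wl by (simp add: mult_ac)
    qed
    also have "\<dots> = (a j * cnj (a j') * ((E j - 1) * cnj (E j' - 1))) * (if int m dvd (j - j') then of_nat m else 0)"
      by (subst sum_distrib_left[symmetric]) (subst geom_ee[OF m], rule refl)
    also have "\<dots> = T p"
    proof (cases "int m dvd (j - j')")
      case True
      have "E (j - j') = 1" unfolding E_def using ee_eq_1_iff[OF m] True by simp
      then have "E j' = E j" unfolding E_def using ee_mult[of "j - j'" "1 / real m" j'] by simp
      then have "(E j - 1) * cnj (E j' - 1) = c j"
        unfolding E_def c_def using ee_minus1_sq[of j "1 / real m"] by simp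
      then show ?thesis using True unfolding T_def p by (simp add: mult_ac)
    next
      case False
      then show ?thesis unfolding T_def p by simp
    qed
    finally show ?thesis unfolding p by simp
  qed
  have Thas: "(T has_sum complex_of_real (\<Sum>l=1..m. (z l)\<^sup>2)) UNIV"
    using tot unfolding tform by simp
  have LHS: "complex_of_real (T_stat n m F / (real n * real m)) = complex_of_real (\<Sum>l=1..m. (z l)\<^sup>2)"
    using n m unfolding T_stat_def z_def by simp
  define B where "B k = {j::int. j \<noteq> k * int m}" for k :: int
  define Z where "Z = {(j, j'). int m dvd (j - j') \<and> j' \<noteq> (0::int)}"
  define \<phi> where "\<phi> q = (case q of (k, j) \<Rightarrow> (j, j - k * int m))" for q :: "int \<times> int"
  have bij: "bij_betw \<phi> (Sigma UNIV B) Z"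
  proof (rule bij_betwI')
    fix q1 q2 assume "q1 \<in> Sigma UNIV B" "q2 \<in> Sigma UNIV B"
    obtain k1 j1 k2 j2 where q: "q1 = (k1, j1)" "q2 = (k2, j2)" by (cases q1, cases q2)
    show "(\<phi> q1 = \<phi> q2) = (q1 = q2)"
      unfolding q \<phi>_def using m by auto
  next
    fix q assume "q \<in> Sigma UNIV B"
    then show "\<phi> q \<in> Z" unfolding \<phi>_def Z_def B_def by (auto split: prod.splits)
  next
    fix p assume "p \<in> Z"
    then obtain j j' where p: "p = (j, j')" "int m dvd (j - j')" "j' \<noteq> 0" unfolding Z_def by auto
    then obtain k where k: "j - j' = int m * k" by blast
    show "\<exists>q\<in>Sigma UNIV B. p = \<phi> q"
      by (rule bexI[of _ "(k, j)"]) (use p k in \<open>auto simp: \<phi>_def B_def algebra_simps\<close>)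
  qed
  have TZ: "infsum T Z = infsum T UNIV"
  proof (rule infsum_cong_neutral)
    fix p assume "p \<in> UNIV - Z"
    then obtain j j' where p: "p = (j, j')" "\<not> (int m dvd (j - j') \<and> j' \<noteq> 0)" unfolding Z_def by auto
    then show "T p = 0" unfolding T_def a_def by auto
  qed auto
  have Tsum: "T summable_on Z" using Thas summable_on_subset_banach[of T UNIV Z] by (auto simp: has_sum_iff)
  have Tsig: "(\<lambda>q. T (\<phi> q)) summable_on Sigma UNIV B"
    using summable_on_reindex_bij_betw[OF bij, of T] Tsum by simp
  have re: "infsum (\<lambda>q. T (\<phi> q)) (Sigma UNIV B) = infsum T Z"
    by (rule infsum_reindex_bij_betw[OF bij])
  have Tphi: "T (\<phi> (k, j)) = of_nat m * (fourier_coeff f j * cnj (fourier_coeff f (j - k * int m))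
        / complex_of_real (4 * pi\<^sup>2 * of_int j * of_int (j - k * int m))
        * complex_of_real (2 - 2 * cos (2 * pi * of_int j / real m)))" for k j
    unfolding T_def \<phi>_def a_def c_def by (simp add: acoef_prod mult_ac)
  have "(\<Sum>\<^sub>\<infinity>k::int. \<Sum>\<^sub>\<infinity>j\<in>B k. T (\<phi> (k, j))) = infsum (\<lambda>q. T (\<phi> q)) (Sigma UNIV B)"
    by (rule infsum_Sigma_banach) (use Tsig in \<open>simp add: case_prod_beta\<close>)
  also have "\<dots> = complex_of_real (\<Sum>l=1..m. (z l)\<^sup>2)"
    unfolding re TZ using Thas by (simp add: infsumI)
  finally have main: "(\<Sum>\<^sub>\<infinity>k::int. \<Sum>\<^sub>\<infinity>j\<in>B k. T (\<phi> (k, j))) = complex_of_real (\<Sum>l=1..m. (z l)\<^sup>2)" .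
  have "(\<Sum>\<^sub>\<infinity>k::int. \<Sum>\<^sub>\<infinity>j\<in>B k. T (\<phi> (k, j))) =
     of_nat m * (\<Sum>\<^sub>\<infinity>k::int. \<Sum>\<^sub>\<infinity>j\<in>{j::int. j \<noteq> k * int m}.
        fourier_coeff f j * cnj (fourier_coeff f (j - k * int m))
        / complex_of_real (4 * pi\<^sup>2 * of_int j * of_int (j - k * int m))
        * complex_of_real (2 - 2 * cos (2 * pi * of_int j / real m)))"
    unfolding Tphi B_def by (simp only: infsum_cmult_right')
  then show ?thesis using main LHS by simp
qed

end
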